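(* Let $R$ be a ring, and let $A$ and $B$ be $R$-algebras that are integral domains. Assume that $A$ is of finite expansion over $R$ and that $B$ is normal, and let $\mathfrak{p} \subset B$ be a prime ideal. Let $\phi: A \to B_\mathfrak{p}$ be a homomorphism of $R$-algebras. Then there exists $f \in B \setminus \mathfrak{p}$ such that $\phi$ factors as $A \to B_f \to B_\mathfrak{p}$, where $B_f \to B_\mathfrak{p}$ is the canonical localization map.
   Context: An $R$-algebra $A$ is of finite expansion over $R$ if there exist finitely many elements $a_1,\dots,a_n \in A$ such that $A$ is integral over the subalgebra $R[a_1,\dots,a_n]$. A domain is normal if it is integrally closed in its field of fractions. *)

theory Defs
  imports "HOL-Computational_Algebra.Polynomial" "HOL-Computational_Algebra.Fraction_Field"
begin

definition is_ring_hom :: "('a::comm_ring_1 \<Rightarrow> 'b::comm_ring_1) \<Rightarrow> bool" where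
  "is_ring_hom f \<longleftrightarrow> f 1 = 1 \<and> (\<forall>x y. f (x + y) = f x + f y) \<and> (\<forall>x y. f (x * y) = f x * f y)"

definition is_subring :: "'a::comm_ring_1 set \<Rightarrow> bool" where
  "is_subring S \<longleftrightarrow> 1 \<in> S \<and> (\<forall>x\<in>S. \<forall>y\<in>S. x + y \<in> S \<and> x * y \<in> S \<and> - x \<in> S)"

definition gen_subalgebra :: "('r::comm_ring_1 \<Rightarrow> 'a::comm_ring_1) \<Rightarrow> 'a list \<Rightarrow> 'a set" where
  "gen_subalgebra iA as = \<Inter>{T. is_subring T \<and> range iA \<subseteq> T \<and> set as \<subseteq> T}"

definition integral_over :: "'a::comm_ring_1 set \<Rightarrow> 'a \<Rightarrow> bool" where
  "integral_over S x \<longleftrightarrow> (\<exists>p::'a poly. lead_coeff p = 1 \<and> (\<forall>i. coeff p i \<in> S) \<and> poly p x = 0)"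

definition finite_expansion :: "('r::comm_ring_1 \<Rightarrow> 'a::comm_ring_1) \<Rightarrow> bool" where
  "finite_expansion iA \<longleftrightarrow> (\<exists>as. \<forall>x. integral_over (gen_subalgebra iA as) x)"

definition normal_domain :: "'b::idom itself \<Rightarrow> bool" where
  "normal_domain _ \<longleftrightarrow>
     (\<forall>z::'b fract. integral_over (range (\<lambda>b. Fract b 1)) z \<longrightarrow> z \<in> range (\<lambda>b. Fract b 1))"

definition is_ideal :: "'a::comm_ring_1 set \<Rightarrow> bool" where
  "is_ideal I \<longleftrightarrow> 0 \<in> I \<and> (\<forall>x\<in>I. \<forall>y\<in>I. x + y \<in> I) \<and> (\<forall>x\<in>I. \<forall>r. r * x \<in> I)"

definition prime_ideal :: "'a::comm_ring_1 set \<Rightarrow> bool" where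
  "prime_ideal P \<longleftrightarrow> is_ideal P \<and> P \<noteq> UNIV \<and> (\<forall>x y. x * y \<in> P \<longrightarrow> x \<in> P \<or> y \<in> P)"

text \<open>Localization B_p of a domain B at a prime p, realised inside Frac(B).\<close>
definition loc_prime :: "'b::idom set \<Rightarrow> 'b fract set" where
  "loc_prime P = {Fract b s | b s. s \<notin> P}"

definition loc_elem :: "'b::idom \<Rightarrow> 'b fract set" where
  "loc_elem f = {Fract b (f ^ n) | b n. True}"

end

theory Submission
  imports Defs
begin

lemma hom_0: "is_ring_hom f \<Longrightarrow> f 0 = 0"
proof -
  assume h: "is_ring_hom f"
  have add: "\<And>x y. f (x + y) = f x + f y" using h unfolding is_ring_hom_def by blast
  have "f (0 + 0) = f 0 + f 0" by (rule add)
  then show ?thesis by simp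
qed

lemma hom_sum_fin:
  assumes h: "is_ring_hom f" and "finite A"
  shows "f (\<Sum>i\<in>A. g i) = (\<Sum>i\<in>A. f (g i))"
  using assms(2)
proof (induction A rule: finite_induct)
  case empty
  have add: "\<And>x y. f (x + y) = f x + f y" using h unfolding is_ring_hom_def by blast
  have "f (0 + 0) = f 0 + f 0" by (rule add)
  then show ?case by simp
next
  case (insert x F)
  have add: "\<And>x y. f (x + y) = f x + f y" using h unfolding is_ring_hom_def by blast
  show ?case using insert(1,2) by (simp add: add insert(3))
qed
lemma hom_sum:
  assumes h: "is_ring_hom f"
  shows "f (\<Sum>i\<in>A. g i) = (\<Sum>i\<in>A. f (g i))"
proof (cases "finite A")
  case True
  then show ?thesis by (rule hom_sum_fin[OF h])
next
  case False
  then show ?thesis by (simp add: hom_0[OF h])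
qed

lemma hom_pow:
  assumes h: "is_ring_hom f"
  shows "f (x ^ n) = f x ^ n"
proof (induction n)
  case 0
  then show ?case using h unfolding is_ring_hom_def by simp
next
  case (Suc n)
  have mul: "\<And>x y. f (x * y) = f x * f y" using h unfolding is_ring_hom_def by blast
  show ?case using Suc by (simp add: mul)
qed

lemma hom_neg:
  assumes h: "is_ring_hom f"
  shows "f (- x) = - f x"
proof -
  have add: "\<And>x y. f (x + y) = f x + f y" using h unfolding is_ring_hom_def by blast
  have "f (x + - x) = f x + f (- x)" by (rule add)
  then have "f x + f (- x) = 0" using hom_0[OF h] by simp
  then show ?thesis by (metis neg_eq_iff_add_eq_0)
qed

lemma monic_sum:
  fixes c :: "nat \<Rightarrow> 'a::comm_ring_1"
  assumes "c n = 1"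
  defines "q \<equiv> (\<Sum>i\<le>n. monom (c i) i)"
  shows "coeff q j = (if j \<le> n then c j else 0)"
    and "lead_coeff q = 1"
    and "poly q x = (\<Sum>i\<le>n. c i * x ^ i)"
proof -
  show cq: "coeff q j = (if j \<le> n then c j else 0)" for j
    unfolding q_def coeff_sum by (auto simp: coeff_monom)
  have "degree q \<le> n"
    unfolding q_def by (rule degree_sum_le) (auto simp: degree_monom_le intro: order.trans[OF degree_monom_le])
  moreover have "n \<le> degree q"
    by (rule le_degree) (use cq[of n] assms in simp)
  ultimately have "degree q = n" by simp
  then show "lead_coeff q = 1" using cq[of n] assms by simp
  show "poly q x = (\<Sum>i\<le>n. c i * x ^ i)"
    unfolding q_def poly_sum poly_monom ..
qed

lemma integral_over_iff:
  assumes "0 \<in> S"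
  shows "integral_over S x \<longleftrightarrow>
    (\<exists>n c. c n = 1 \<and> (\<forall>i\<le>n. c i \<in> S) \<and> (\<Sum>i\<le>n. c i * x ^ i) = 0)"
proof
  assume "integral_over S x"
  then obtain p where p: "lead_coeff p = 1" "\<forall>i. coeff p i \<in> S" "poly p x = 0"
    unfolding integral_over_def by blast
  then show "\<exists>n c. c n = 1 \<and> (\<forall>i\<le>n. c i \<in> S) \<and> (\<Sum>i\<le>n. c i * x ^ i) = 0"
    by (intro exI[of _ "degree p"] exI[of _ "coeff p"]) (simp add: poly_altdef)
next
  assume "\<exists>n c. c n = 1 \<and> (\<forall>i\<le>n. c i \<in> S) \<and> (\<Sum>i\<le>n. c i * x ^ i) = 0"
  then obtain n c where c: "c n = 1" "\<forall>i\<le>n. c i \<in> S" "(\<Sum>i\<le>n. c i * x ^ i) = 0" by blast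
  show "integral_over S x"
    unfolding integral_over_def
    apply (rule exI[of _ "\<Sum>i\<le>n. monom (c i) i"])
    using monic_sum[of c n, OF c(1)] c assms by auto
qed

lemma loc_elem_mem: "x \<in> loc_elem f \<longleftrightarrow> (\<exists>b n. x = Fract b (f ^ n))"
  unfolding loc_elem_def by blast

lemma loc_elem_subring:
  assumes "(f::'b::idom) \<noteq> 0"
  shows "is_subring (loc_elem f)"
  unfolding is_subring_def
proof (intro conjI ballI)
  show "1 \<in> loc_elem f" unfolding loc_elem_mem by (rule exI[of _ 1], rule exI[of _ 0]) (simp add: One_fract_def)
next
  fix x y assume "x \<in> loc_elem f" "y \<in> loc_elem f"
  then obtain a m b n where xy: "x = Fract a (f ^ m)" "y = Fract b (f ^ n)" unfolding loc_elem_mem by blast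
  have nz: "f ^ m \<noteq> 0" "f ^ n \<noteq> 0" using assms by auto
  show "x + y \<in> loc_elem f" unfolding loc_elem_mem
  proof (intro exI)
    show "x + y = Fract (a * f ^ n + b * f ^ m) (f ^ (m + n))"
      using nz by (simp add: xy power_add)
  qed
  show "x * y \<in> loc_elem f" unfolding loc_elem_mem
  proof (intro exI)
    show "x * y = Fract (a * b) (f ^ (m + n))"
      by (simp add: xy power_add)
  qed
  show "- x \<in> loc_elem f" unfolding loc_elem_mem
  proof (intro exI)
    show "- x = Fract (- a) (f ^ m)"
      by (simp add: xy)
  qed
qed

lemma subring_0: "is_subring S \<Longrightarrow> 0 \<in> S"
  unfolding is_subring_def by (metis add.right_inverse)

lemma choose_common:
  assumes "\<forall>i<(n::nat). \<exists>m::nat. Q i m" and "\<And>i m k. Q i m \<Longrightarrow> m \<le> k \<Longrightarrow> Q i k"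
  shows "\<exists>k. \<forall>i<n. Q i k"
proof -
  from assms(1) obtain g where g: "\<forall>i<n. Q i (g i)" by metis
  have "\<forall>i<n. Q i (\<Sum>j<n. g j)"
  proof (intro allI impI)
    fix i assume "i < n"
    have "g i \<le> (\<Sum>j<n. g j)" by (rule member_le_sum) (use \<open>i<n\<close> in auto)
    then show "Q i (\<Sum>j<n. g j)" using g assms(2) \<open>i<n\<close> by blast
  qed
  then show ?thesis by blast
qed

lemma loc_elem_normal:
  fixes f :: "'b::idom"
  assumes nd: "normal_domain TYPE('b)" and f0: "f \<noteq> 0"
    and int: "integral_over (loc_elem f) z"
  shows "z \<in> loc_elem f"
proof -
  let ?S = "loc_elem f"
  let ?B = "range (\<lambda>b. Fract b 1) :: 'b fract set"
  have S0: "0 \<in> ?S" by (rule subring_0[OF loc_elem_subring[OF f0]])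
  obtain n c where c: "c n = 1" "\<forall>i\<le>n. c i \<in> ?S" "(\<Sum>i\<le>n. c i * z ^ i) = 0"
    using int integral_over_iff[OF S0] by blast
  have Bmul: "x \<in> ?B \<Longrightarrow> y \<in> ?B \<Longrightarrow> x * y \<in> ?B" for x y by auto
  have ex: "\<forall>i<n. \<exists>m. c i * Fract (f ^ m) 1 \<in> ?B"
  proof (intro allI impI)
    fix i assume "i < n"
    then obtain b m where "c i = Fract b (f ^ m)" using c(2) loc_elem_mem by (meson less_imp_le)
    moreover have "Fract (b * f ^ m) (f ^ m * 1) = Fract b 1"
      using mult_fract_cancel[of "f ^ m" b 1] f0 by (simp add: mult.commute)
    ultimately show "\<exists>m. c i * Fract (f ^ m) 1 \<in> ?B"
      by (intro exI[of _ m]) auto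
  qed
  have mono: "c i * Fract (f ^ k) 1 \<in> ?B" if m1: "c i * Fract (f ^ m) 1 \<in> ?B" and m2: "m \<le> k" for i m k
  proof -
    obtain b where b: "c i * Fract (f ^ m) 1 = Fract b 1" using m1 by blast
    have "f ^ k = f ^ m * f ^ (k - m)"
      using m2 by (simp add: power_add[symmetric])
    then have "Fract (f ^ k) 1 = Fract (f ^ m) 1 * Fract (f ^ (k - m)) 1"
      by simp
    then have "c i * Fract (f ^ k) 1 = (c i * Fract (f ^ m) 1) * Fract (f ^ (k - m)) 1"
      by (simp only: mult.assoc)
    also have "\<dots> = Fract (b * f ^ (k - m)) 1" using b by simp
    finally show ?thesis by blast
  qed
  obtain k where k: "\<forall>i<n. c i * Fract (f ^ k) 1 \<in> ?B"
    using choose_common[of n "\<lambda>i m. c i * Fract (f ^ m) 1 \<in> ?B", OF ex] mono by blast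
  define F where "F = Fract (f ^ k) 1"
  have Fpow: "F ^ j \<in> ?B" for j
    by (induction j) (auto simp: F_def One_fract_def)
  define d where "d i = c i * F ^ (n - i)" for i
  have d_n: "d n = 1" using c(1) by (simp add: d_def)
  have dB: "\<forall>i\<le>n. d i \<in> ?B"
  proof (intro allI impI)
    fix i assume "i \<le> n"
    show "d i \<in> ?B"
    proof (cases "i = n")
      case True then show ?thesis using d_n by (auto simp: One_fract_def)
    next
      case False
      then have "i < n" using \<open>i \<le> n\<close> by simp
      then have "n - i = Suc (n - i - 1)" by simp
      then have "d i = (c i * F) * F ^ (n - i - 1)" unfolding d_def
        by (metis mult.assoc power_Suc)
      then show ?thesis using k \<open>i < n\<close> Fpow Bmul F_def by auto
    qed
  qed
  have "(\<Sum>i\<le>n. d i * (F * z) ^ i) = (\<Sum>i\<le>n. F ^ n * (c i * z ^ i))"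
  proof (rule sum.cong[OF refl])
    fix i assume "i \<in> {..n}"
    then have "F ^ (n - i) * F ^ i = F ^ n" by (simp add: power_add[symmetric])
    then show "d i * (F * z) ^ i = F ^ n * (c i * z ^ i)"
      unfolding d_def power_mult_distrib by (metis mult.assoc mult.commute)
  qed
  also have "\<dots> = 0" using c(3) by (simp add: sum_distrib_left[symmetric])
  finally have "integral_over ?B (F * z)"
    using integral_over_iff[of ?B] d_n dB by (auto simp: Zero_fract_def)
  then have "F * z \<in> ?B" using nd unfolding normal_domain_def by blast
  then obtain b where b: "F * z = Fract b 1" by blast
  have Fnz: "F \<noteq> 0" using f0 by (simp add: F_def Zero_fract_def eq_fract)
  then have "z = Fract b 1 / F" using b by (simp add: field_simps)
  also have "\<dots> = Fract b (f ^ k)" by (simp add: F_def)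
  finally show ?thesis unfolding loc_elem_mem by blast
qed

lemma preimage_subring:
  assumes h: "is_ring_hom \<phi>" and T: "is_subring T"
  shows "is_subring (\<phi> -` T)"
  using T hom_neg[OF h] h unfolding is_subring_def is_ring_hom_def by auto

theorem lemma1p11:
  fixes iA :: "'r::comm_ring_1 \<Rightarrow> 'a::idom"
    and iB :: "'r \<Rightarrow> 'b::idom"
    and P :: "'b set"
    and \<phi> :: "'a \<Rightarrow> 'b fract"
  assumes "is_ring_hom iA" and "is_ring_hom iB"
    and "finite_expansion iA"
    and "normal_domain TYPE('b)"
    and "prime_ideal P"
    and "is_ring_hom \<phi>" and "range \<phi> \<subseteq> loc_prime P"
    and "\<forall>r. \<phi> (iA r) = Fract (iB r) 1"
  shows "\<exists>f. f \<notin> P \<and> (\<exists>\<psi> :: 'a \<Rightarrow> 'b fract. is_ring_hom \<psi> \<and> range \<psi> \<subseteq> loc_elem f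
            \<and> (\<forall>r. \<psi> (iA r) = Fract (iB r) 1) \<and> (\<forall>x. \<phi> x = \<psi> x))"
proof -
  note h = assms(6)
  have P0: "0 \<in> P" and Pmul: "\<And>x y. x * y \<in> P \<Longrightarrow> x \<in> P \<or> y \<in> P"
    and Pid: "\<And>x r. x \<in> P \<Longrightarrow> r * x \<in> P" and PU: "P \<noteq> UNIV"
    using assms(5) unfolding prime_ideal_def is_ideal_def by auto
  have P1: "1 \<notin> P"
  proof
    assume "1 \<in> P"
    then have "r \<in> P" for r using Pid[of 1 r] by simp
    then show False using PU by auto
  qed
  obtain as where int: "\<forall>x. integral_over (gen_subalgebra iA as) x"
    using assms(3) unfolding finite_expansion_def by blast
  have "\<exists>f. f \<notin> P \<and> (\<forall>a\<in>set as. \<phi> a \<in> loc_elem f)"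
  proof (induction as)
    case Nil
    then show ?case using P1 by auto
  next
    case (Cons a as)
    then obtain f where f: "f \<notin> P" "\<forall>a\<in>set as. \<phi> a \<in> loc_elem f" by blast
    have "\<phi> a \<in> loc_prime P" using assms(7) by auto
    then obtain b s where bs: "\<phi> a = Fract b s" "s \<notin> P" unfolding loc_prime_def by blast
    have f0: "f \<noteq> 0" and s0: "s \<noteq> 0" using f(1) bs(2) P0 by auto
    have fs: "f * s \<notin> P" using Pmul f(1) bs(2) by blast
    have "\<forall>y\<in>set (a # as). \<phi> y \<in> loc_elem (f * s)"
    proof
      fix y assume "y \<in> set (a # as)"
      then consider "y = a" | "y \<in> set as" by auto
      then show "\<phi> y \<in> loc_elem (f * s)"
      proof cases
        case 1
        have "Fract b s = Fract (f * b) (f * s)" using mult_fract_cancel[OF f0] by simp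
        then have "\<phi> y = Fract (f * b) ((f * s) ^ 1)" using 1 bs by simp
        then show ?thesis unfolding loc_elem_mem by blast
      next
        case 2
        then obtain c n where c: "\<phi> y = Fract c (f ^ n)" using f(2) loc_elem_mem by blast
        have "Fract c (f ^ n) = Fract (s ^ n * c) (s ^ n * f ^ n)"
          using mult_fract_cancel[of "s ^ n" c "f ^ n"] s0 by simp
        then have "\<phi> y = Fract (s ^ n * c) ((f * s) ^ n)" using c
          by (simp add: power_mult_distrib mult.commute)
        then show ?thesis unfolding loc_elem_mem by blast
      qed
    qed
    then show ?case using fs by blast
  qed
  then obtain f where f: "f \<notin> P" "\<forall>a\<in>set as. \<phi> a \<in> loc_elem f" by blast
  have f0: "f \<noteq> 0" using f(1) P0 by auto
  let ?S = "loc_elem f"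
  have Ssub: "is_subring ?S" by (rule loc_elem_subring[OF f0])
  have "\<phi> -` ?S \<in> {T. is_subring T \<and> range iA \<subseteq> T \<and> set as \<subseteq> T}"
  proof (intro CollectI conjI)
    show "is_subring (\<phi> -` ?S)" by (rule preimage_subring[OF h Ssub])
    show "range iA \<subseteq> \<phi> -` ?S"
    proof
      fix x assume "x \<in> range iA"
      then obtain r where xr: "x = iA r" by blast
      have "\<phi> (iA r) = Fract (iB r) 1" using assms(8) by (rule spec)
      also have "\<dots> = Fract (iB r) (f ^ 0)" by (simp only: power_0)
      finally have eq: "\<phi> (iA r) = Fract (iB r) (f ^ 0)" .
      have "\<phi> x \<in> ?S" unfolding xr loc_elem_mem by (intro exI) (rule eq)
      then show "x \<in> \<phi> -` ?S" by (rule vimageI2)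
    qed
    show "set as \<subseteq> \<phi> -` ?S" using f(2) by blast
  qed
  then have Gsub: "gen_subalgebra iA as \<subseteq> \<phi> -` ?S"
    unfolding gen_subalgebra_def by (rule Inter_lower)
  have G0: "0 \<in> gen_subalgebra iA as"
    unfolding gen_subalgebra_def using subring_0 by blast
  have S0: "0 \<in> ?S" by (rule subring_0[OF Ssub])
  have img: "\<phi> x \<in> ?S" for x
  proof -
    obtain n c where c: "c n = 1" "\<forall>i\<le>n. c i \<in> gen_subalgebra iA as"
        "(\<Sum>i\<le>n. c i * x ^ i) = 0"
      using int integral_over_iff[OF G0] by blast
    have "(\<Sum>i\<le>n. \<phi> (c i) * \<phi> x ^ i) = \<phi> (\<Sum>i\<le>n. c i * x ^ i)"
    proof -
      have mul: "\<And>x y. \<phi> (x * y) = \<phi> x * \<phi> y" using h unfolding is_ring_hom_def by blast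
      show ?thesis by (simp add: hom_sum[OF h] hom_pow[OF h] mul)
    qed
    also have "\<dots> = 0" using c(3) hom_0[OF h] by simp
    finally have "integral_over ?S (\<phi> x)"
      unfolding integral_over_iff[OF S0]
      using c(1,2) Gsub h unfolding is_ring_hom_def
      by (intro exI[of _ n] exI[of _ "\<lambda>i. \<phi> (c i)"]) auto
    then show ?thesis by (rule loc_elem_normal[OF assms(4) f0])
  qed
  show ?thesis
    using f(1) h img assms(8) by blast
qed

end
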